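(* Let $d,T\ge 1$, let $0<b<c$, and let $x_1,\dots,x_T\in\mathbb{R}^d$, $y_1,\dots,y_T\in\mathbb{R}$ satisfy $\|x_t\|^2\le X^2$ and $|y_t|\le Y$ for all $t$, for some $X>0$, $Y\ge 0$. Let $\hat y_t$ be the LASER predictions and $D_t$ the LASER matrices (defined in the context), and write $L_T(\mathrm{LASER})=\sum_{t=1}^T(y_t-\hat y_t)^2$. Then for every sequence $u_1,\dots,u_T\in\mathbb{R}^d$, with $V=\sum_{t=1}^{T-1}\|u_t-u_{t+1}\|^2$ and $L_T(\{u_t\})=\sum_{t=1}^T (x_t^\top u_t-y_t)^2$, \[ L_T(\mathrm{LASER}) \le b\|u_1\|^2 + L_T(\{u_t\}) + Y^2\ln\Big|\tfrac{1}{b}D_T\Big| + c^{-1}Y^2\,\mathrm{Tr}(D_0) + cV + c^{-1}Y^2Td\,\max\Big\{\tfrac{3X^2+\sqrt{X^4+4X^2c}}{2},\; b+X^2\Big\}. \] Furthermore, suppose $b=\varepsilon c$ for some $0<\varepsilon<1$, and let $\mu=\max\big\{\tfrac{9}{8}X^2,\ \tfrac{(b+X^2)^2}{8X^2}\big\}$. If $V>0$, $V\le T\,\frac{\sqrt2\,Y^2dX}{\mu^{3/2}}$, and $c=\big(\sqrt2\,TY^2dX/V\big)^{2/3}$, then \[ L_T(\mathrm{LASER}) \le b\|u_1\|^2 + 3\big(\sqrt2\,Y^2dX\big)^{2/3}T^{2/3}V^{1/3} + \frac{\varepsilon}{1-\varepsilon}Y^2d + L_T(\{u_t\}) + Y^2\ln\Big|\tfrac1b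 D_T\Big|. \]
   Context: LASER algorithm: with parameters $0<b<c$, set $D_0=\frac{bc}{c-b}I\in\mathbb{R}^{d\times d}$ and $e_0=0\in\mathbb{R}^d$. For $t=1,\dots,T$: compute $D_t=\big(D_{t-1}^{-1}+c^{-1}I\big)^{-1}+x_tx_t^\top$; predict $\hat y_t = x_t^\top D_t^{-1}\big(I+c^{-1}D_{t-1}\big)^{-1}e_{t-1}$; then set $e_t=\big(I+c^{-1}D_{t-1}\big)^{-1}e_{t-1}+y_tx_t$. $|A|$ denotes the determinant of a matrix $A$, $\mathrm{Tr}$ the trace, $I$ the $d\times d$ identity. *)

theory Defs
  imports "HOL-Analysis.Analysis"
begin

text \<open>LASER algorithm. Vectors in R^d are real^'n (d = CARD('n)); matrices real^'n^'n.
  Inputs x t, y t are used for t = 1..T (index 0 unused).\<close>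

definition outer :: "real^'n \<Rightarrow> real^'n^'n" where
  "outer v = (\<chi> i j. v$i * v$j)"

fun laser_D :: "real \<Rightarrow> real \<Rightarrow> (nat \<Rightarrow> real^'n) \<Rightarrow> nat \<Rightarrow> real^'n^'n" where
  "laser_D b c x 0 = ((b * c) / (c - b)) *\<^sub>R mat 1"
| "laser_D b c x (Suc t) =
     matrix_inv (matrix_inv (laser_D b c x t) + (1 / c) *\<^sub>R mat 1) + outer (x (Suc t))"

fun laser_e :: "real \<Rightarrow> real \<Rightarrow> (nat \<Rightarrow> real^'n) \<Rightarrow> (nat \<Rightarrow> real) \<Rightarrow> nat \<Rightarrow> real^'n" where
  "laser_e b c x y 0 = 0"
| "laser_e b c x y (Suc t) =
     matrix_inv (mat 1 + (1 / c) *\<^sub>R laser_D b c x t) *v laser_e b c x y t + y (Suc t) *\<^sub>R x (Suc t)"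

text \<open>Prediction at round t (meaningful for t \<ge> 1).\<close>
definition laser_pred :: "real \<Rightarrow> real \<Rightarrow> (nat \<Rightarrow> real^'n) \<Rightarrow> (nat \<Rightarrow> real) \<Rightarrow> nat \<Rightarrow> real" where
  "laser_pred b c x y t =
     x t \<bullet> (matrix_inv (laser_D b c x t) *v
       (matrix_inv (mat 1 + (1 / c) *\<^sub>R laser_D b c x (t - 1)) *v laser_e b c x y (t - 1)))"

definition laser_loss :: "real \<Rightarrow> real \<Rightarrow> (nat \<Rightarrow> real^'n) \<Rightarrow> (nat \<Rightarrow> real) \<Rightarrow> nat \<Rightarrow> real" where
  "laser_loss b c x y T = (\<Sum>t=1..T. (y t - laser_pred b c x y t)^2)"

definition comp_loss :: "(nat \<Rightarrow> real^'n) \<Rightarrow> (nat \<Rightarrow> real^'n) \<Rightarrow> (nat \<Rightarrow> real) \<Rightarrow> nat \<Rightarrow> real" where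
  "comp_loss u x y T = (\<Sum>t=1..T. (x t \<bullet> u t - y t)^2)"

definition variation :: "(nat \<Rightarrow> real^'n) \<Rightarrow> nat \<Rightarrow> real" where
  "variation u T = (\<Sum>t=1..T-1. (norm (u t - u (Suc t)))^2)"

end

theory Submission
  imports Defs
begin


definition symm :: "real^'n^'n \<Rightarrow> bool" where
  "symm M \<longleftrightarrow> (\<forall>u v. (M *v u) \<bullet> v = u \<bullet> (M *v v))"

definition pd :: "real^'n^'n \<Rightarrow> bool" where
  "pd M \<longleftrightarrow> (\<forall>v. v \<noteq> 0 \<longrightarrow> 0 < v \<bullet> (M *v v))"

lemma pd_invertible:
  fixes M :: "real^'n^'n"
  assumes "pd M" shows "invertible M"
proof -
  have "\<forall>z. M *v z = 0 \<longrightarrow> z = 0"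
    using assms unfolding pd_def by (metis inner_zero_right less_irrefl)
  then show ?thesis
    by (simp add: invertible_left_inverse matrix_left_invertible_ker)
qed

lemma minv:
  fixes M :: "real^'n^'n"
  assumes "invertible M"
  shows "M ** matrix_inv M = mat 1" "matrix_inv M ** M = mat 1"
proof -
  have "\<exists>A'. M ** A' = mat 1 \<and> A' ** M = mat 1" using assms unfolding invertible_def by blast
  then have "M ** matrix_inv M = mat 1 \<and> matrix_inv M ** M = mat 1"
    unfolding matrix_inv_def by (rule someI_ex)
  then show "M ** matrix_inv M = mat 1" "matrix_inv M ** M = mat 1" by auto
qed

lemma minv_vec:
  fixes M :: "real^'n^'n"
  assumes "invertible M"
  shows "M *v (matrix_inv M *v v) = v" "matrix_inv M *v (M *v v) = v"
  by (simp_all add: matrix_vector_mul_assoc minv[OF assms])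

lemma minv_eq:
  fixes M :: "real^'n^'n"
  assumes "invertible M" "M *v z = v"
  shows "matrix_inv M *v v = z"
  using minv_vec(2)[OF assms(1), of z] assms(2) by simp

lemma inj_invertible:
  fixes M :: "real^'n^'n"
  assumes "\<And>z. M *v z = 0 \<Longrightarrow> z = 0" shows "invertible M"
  using assms by (simp add: invertible_left_inverse matrix_left_invertible_ker)

lemma symm_inv:
  fixes M :: "real^'n^'n"
  assumes "symm M" "invertible M"
  shows "symm (matrix_inv M)"
  unfolding symm_def
proof (intro allI)
  fix u v
  define a where "a = matrix_inv M *v u"
  define b where "b = matrix_inv M *v v"
  have u: "u = M *v a" and v: "v = M *v b" using minv_vec(1)[OF assms(2)] a_def b_def by auto
  show "(matrix_inv M *v u) \<bullet> v = u \<bullet> (matrix_inv M *v v)"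
    using assms(1) unfolding symm_def a_def[symmetric] b_def[symmetric]
    by (metis u v inner_commute)
qed

lemma pd_inv:
  fixes M :: "real^'n^'n"
  assumes "pd M"
  shows "pd (matrix_inv M)"
  unfolding pd_def
proof (intro allI impI)
  fix v :: "real^'n" assume v: "v \<noteq> 0"
  have iM: "invertible M" using pd_invertible assms by blast
  define z where "z = matrix_inv M *v v"
  have vz: "v = M *v z" using minv_vec(1)[OF iM] z_def by auto
  then have "z \<noteq> 0" using v by auto
  then have "0 < z \<bullet> (M *v z)" using assms unfolding pd_def by blast
  then show "0 < v \<bullet> (matrix_inv M *v v)"
    unfolding z_def[symmetric] vz by (simp add: inner_commute minv_vec(2)[OF iM])
qed

lemma outer_mult: "outer x *v (v::real^'n) = (x \<bullet> v) *\<^sub>R x"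
  by (simp add: outer_def vec_eq_iff matrix_vector_mult_def inner_vec_def sum_distrib_left mult.commute mult.left_commute)

lemma scaled_id_mult: "(k *\<^sub>R mat 1) *v (v::real^'n) = k *\<^sub>R v"
  by (metis matrix_vector_mul_lid scaleR_matrix_vector_assoc)

lemma symm_add: "symm A \<Longrightarrow> symm B \<Longrightarrow> symm (A + B)"
  by (simp add: symm_def matrix_vector_mult_add_rdistrib inner_add_left inner_add_right)

lemma symm_outer: "symm (outer x)"
  by (simp add: symm_def outer_mult inner_commute)

lemma symm_scaled_id: "symm (k *\<^sub>R mat 1)"
  by (simp add: symm_def scaled_id_mult)

lemma quad_scaled_id: "(v::real^'n) \<bullet> ((k *\<^sub>R mat 1) *v v) = k * (norm v)^2"
  by (simp add: scaled_id_mult power2_norm_eq_inner)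

lemma quad_outer: "(v::real^'n) \<bullet> (outer x *v v) = (x \<bullet> v)^2"
  by (simp add: outer_mult power2_eq_square inner_commute)



lemma pd_nonneg: "pd M \<Longrightarrow> 0 \<le> v \<bullet> (M *v v)"
  unfolding pd_def by (cases "v = 0") (auto intro: less_imp_le)

lemma inv_upper:
  fixes P :: "real^'n^'n"
  assumes "pd P" "\<alpha> > 0" "\<And>v. \<alpha> * (norm v)^2 \<le> v \<bullet> (P *v v)"
  shows "v \<bullet> (matrix_inv P *v v) \<le> (norm v)^2 / \<alpha>"
proof -
  have iP: "invertible P" using pd_invertible assms(1) by blast
  define w where "w = matrix_inv P *v v"
  have Pw: "P *v w = v" using minv_vec(1)[OF iP] w_def by simp
  have q: "v \<bullet> w = w \<bullet> (P *v w)" using Pw by (simp add: inner_commute)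
  have cs: "v \<bullet> w \<le> norm v * norm w" by (rule norm_cauchy_schwarz)
  have l: "\<alpha> * (norm w)^2 \<le> v \<bullet> w" using assms(3)[of w] q by simp
  have "norm w \<le> norm v / \<alpha>"
  proof (cases "norm w = 0")
    case True then show ?thesis using assms(2) by simp
  next
    case False
    then have "norm w > 0" by simp
    have "\<alpha> * norm w * norm w \<le> norm v * norm w" using l cs by (simp add: power2_eq_square mult.assoc)
    then have "\<alpha> * norm w \<le> norm v" using \<open>norm w > 0\<close> by simp
    then show ?thesis using assms(2) by (simp add: field_simps)
  qed
  then have "norm v * norm w \<le> norm v * (norm v / \<alpha>)" by (rule mult_left_mono) simp
  then show ?thesis using cs unfolding w_def by (simp add: power2_eq_square)
qed

lemma symm_app: "symm D \<Longrightarrow> (D *v u) \<bullet> v = u \<bullet> (D *v v)"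
  unfolding symm_def by blast

lemma cs_form:
  fixes D :: "real^'n^'n"
  assumes "symm D" "\<And>v. 0 \<le> v \<bullet> (D *v v)"
  shows "(a \<bullet> (D *v b))^2 \<le> (a \<bullet> (D *v a)) * (b \<bullet> (D *v b))"
proof -
  define p where "p = a \<bullet> (D *v a)"
  define m where "m = a \<bullet> (D *v b)"
  define n where "n = b \<bullet> (D *v b)"
  have quad: "0 \<le> p + 2 * t * m + t^2 * n" for t
  proof -
    have "0 \<le> (a + t *\<^sub>R b) \<bullet> (D *v (a + t *\<^sub>R b))" by (rule assms(2))
    also have "\<dots> = p + t * (a \<bullet> (D *v b)) + t * (b \<bullet> (D *v a)) + t^2 * n"
      by (simp add: p_def n_def matrix_vector_right_distrib matrix_vector_mult_scaleR inner_add_left inner_add_right power2_eq_square algebra_simps)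
    also have "b \<bullet> (D *v a) = m"
      using symm_app[OF assms(1), of a b] by (simp add: m_def inner_commute)
    finally show ?thesis by (simp add: m_def)
  qed
  have pn: "0 \<le> n" "0 \<le> p" using assms(2) n_def p_def by auto
  show ?thesis
  proof (cases "n = 0")
    case False
    then have n: "n > 0" using pn by simp
    have "0 \<le> p + 2 * (-m/n) * m + (-m/n)^2 * n" by (rule quad)
    then have "0 \<le> p - m^2 / n" using n by (simp add: power2_eq_square field_simps)
    then have "m^2 \<le> p * n" using n by (simp add: field_simps)
    then show ?thesis by (simp add: m_def p_def n_def)
  next
    case True
    have "m = 0"
    proof (rule ccontr)
      assume "m \<noteq> 0"
      have "0 \<le> p + 2 * (-(p+1)/(2*m)) * m + (-(p+1)/(2*m))^2 * n" by (rule quad)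
      then have "0 \<le> p - (p + 1)" using True \<open>m \<noteq> 0\<close> by (simp add: field_simps)
      then show False by simp
    qed
    then show ?thesis using pn by (simp add: m_def p_def n_def)
  qed
qed

lemma inv_lower:
  fixes D :: "real^'n^'n"
  assumes "symm D" "pd D" "K > 0" "\<And>v. v \<bullet> (D *v v) \<le> K * (norm v)^2"
  shows "(norm v)^2 / K \<le> v \<bullet> (matrix_inv D *v v)"
proof -
  have iD: "invertible D" using pd_invertible assms(2) by blast
  define z where "z = matrix_inv D *v v"
  have Dz: "D *v z = v" using minv_vec(1)[OF iD] z_def by simp
  define q where "q = v \<bullet> z"
  have q: "q = z \<bullet> (D *v z)" using Dz by (simp add: q_def inner_commute)
  have "(z \<bullet> (D *v v))^2 \<le> (z \<bullet> (D *v z)) * (v \<bullet> (D *v v))"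
    by (rule cs_form[OF assms(1) pd_nonneg[OF assms(2)]])
  moreover have "z \<bullet> (D *v v) = (norm v)^2"
    using symm_app[OF assms(1), of z v] Dz by (simp add: power2_norm_eq_inner)
  ultimately have "((norm v)^2)^2 \<le> q * (v \<bullet> (D *v v))" using q by simp
  also have "\<dots> \<le> q * (K * (norm v)^2)"
    using assms(4) q pd_nonneg[OF assms(2)] by (simp add: mult_left_mono)
  finally have h: "((norm v)^2)^2 \<le> q * K * (norm v)^2" by (simp add: mult.assoc)
  have "(norm v)^2 \<le> q * K"
  proof (cases "v = 0")
    case True then show ?thesis using q pd_nonneg[OF assms(2)] assms(3) by simp
  next
    case False
    then have N: "(norm v)^2 > 0" by simp
    have "(norm v)^2 * (norm v)^2 \<le> (q * K) * (norm v)^2" using h by (simp add: power2_eq_square[of "(norm v)^2"])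
    then show ?thesis using N mult_le_cancel_right_pos by blast
  qed
  then show ?thesis using assms(3) unfolding z_def[symmetric] q_def[symmetric] by (simp add: field_simps)
qed



lemma pd_add_psd: "pd A \<Longrightarrow> (\<And>v. 0 \<le> v \<bullet> (B *v v)) \<Longrightarrow> pd (A + B)"
  unfolding pd_def by (simp add: matrix_vector_mult_add_rdistrib inner_add_right add_pos_nonneg)

lemma conv:
  fixes D :: "real^'n^'n"
  assumes "symm D" "pd D" "c > 0"
  shows "b' \<bullet> (matrix_inv (matrix_inv D + (1/c) *\<^sub>R mat 1) *v b') \<le> a \<bullet> (D *v a) + c * (norm (a - b'))^2"
proof -
  define P where "P = matrix_inv D + (1/c) *\<^sub>R mat 1"
  have iD: "invertible D" using pd_invertible assms(2) by blast
  have pP: "pd P" unfolding P_def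
    by (rule pd_add_psd[OF pd_inv[OF assms(2)]]) (simp add: quad_scaled_id assms(3) less_imp_le)
  have iP: "invertible P" using pd_invertible pP by blast
  define z where "z = matrix_inv P *v b'"
  have Pz: "P *v z = b'" using minv_vec(1)[OF iP] z_def by simp
  define as where "as = matrix_inv D *v z"
  have Das: "D *v as = z" using minv_vec(1)[OF iD] as_def by simp
  have b': "b' = as + (1/c) *\<^sub>R z"
    using Pz unfolding P_def by (simp add: matrix_vector_mult_add_rdistrib scaled_id_mult as_def)
  define h where "h = a - as"
  have a: "a = as + h" by (simp add: h_def)
  have e1: "a \<bullet> (D *v a) = as \<bullet> z + 2 * (h \<bullet> z) + h \<bullet> (D *v h)"
  proof -
    have "a \<bullet> (D *v a) = as \<bullet> (D *v as) + as \<bullet> (D *v h) + h \<bullet> (D *v as) + h \<bullet> (D *v h)"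
      unfolding a by (simp add: matrix_vector_right_distrib inner_add_left inner_add_right)
    moreover have "as \<bullet> (D *v h) = h \<bullet> z"
      using symm_app[OF assms(1), of as h] Das by (simp add: inner_commute)
    ultimately show ?thesis using Das by simp
  qed
  have e2: "(norm (a - b'))^2 = (norm h)^2 - 2/c * (h \<bullet> z) + (1/c)^2 * (z \<bullet> z)"
  proof -
    have "a - b' = h - (1/c) *\<^sub>R z" using a b' by simp
    then show ?thesis unfolding power2_norm_eq_inner
      by (simp add: inner_diff_left inner_diff_right inner_commute power2_eq_square)
  qed
  have e3: "b' \<bullet> z = as \<bullet> z + (1/c) * (z \<bullet> z)" using b' by (simp add: inner_add_left)
  have hD: "0 \<le> h \<bullet> (D *v h)" by (rule pd_nonneg[OF assms(2)])
  have "a \<bullet> (D *v a) + c * (norm (a - b'))^2 = b' \<bullet> z + h \<bullet> (D *v h) + c * (norm h)^2"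
    unfolding e1 e2 e3 using assms(3) by (simp add: field_simps power2_eq_square)
  moreover have "0 \<le> c * (norm h)^2" using assms(3) by simp
  ultimately show ?thesis using hD unfolding P_def[symmetric] z_def[symmetric] by linarith
qed



lemma step:
  fixes A :: "real^'n^'n" and x v w :: "real^'n" and y :: real
  assumes sA: "symm A" and pA: "pd A"
  defines "D \<equiv> A + outer x"
  defines "r \<equiv> x \<bullet> (matrix_inv A *v x)"
  shows "(y - x \<bullet> (matrix_inv D *v (A *v w)))^2 - y^2 * (r / (1 + r))
           + (v - matrix_inv D *v (A *v w + y *\<^sub>R x)) \<bullet> (D *v (v - matrix_inv D *v (A *v w + y *\<^sub>R x)))
         \<le> (v - w) \<bullet> (A *v (v - w)) + (x \<bullet> v - y)^2"
proof -
  have iA: "invertible A" using pd_invertible pA by blast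
  have pD: "pd D" unfolding D_def by (rule pd_add_psd[OF pA]) (simp add: quad_outer)
  have iD: "invertible D" using pd_invertible pD by blast
  have sD: "symm D" unfolding D_def by (rule symm_add[OF sA symm_outer])
  define a where "a = matrix_inv A *v x"
  have Aa: "A *v a = x" using minv_vec(1)[OF iA] a_def by simp
  have r0: "0 \<le> r" unfolding r_def by (rule pd_nonneg[OF pd_inv[OF pA]])
  have ra: "r = x \<bullet> a" by (simp add: r_def a_def)
  define q where "q = 1 / (1 + r)"
  have q1: "q * (1 + r) = 1" using r0 by (simp add: q_def)
  define g where "g = x \<bullet> w"
  have Dx: "D *v (q *\<^sub>R a) = x"
  proof -
    have "D *v (q *\<^sub>R a) = q *\<^sub>R (A *v a + (x \<bullet> a) *\<^sub>R x)"
      by (simp add: D_def matrix_vector_mult_add_rdistrib outer_mult matrix_vector_mult_scaleR scaleR_right_distrib)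
    also have "\<dots> = (q * (1 + r)) *\<^sub>R x" using Aa ra by (simp add: algebra_simps)
    finally show ?thesis using q1 by simp
  qed
  have DAw: "D *v (w - (q * g) *\<^sub>R a) = A *v w"
  proof -
    have "D *v (w - (q * g) *\<^sub>R a) = A *v w + g *\<^sub>R x - (q * g) *\<^sub>R (A *v a + r *\<^sub>R x)"
      by (simp add: D_def matrix_vector_mult_add_rdistrib outer_mult matrix_vector_mult_scaleR matrix_vector_right_distrib
          matrix_vector_mult_diff_distrib inner_diff_right g_def ra algebra_simps)
    also have "\<dots> = A *v w + g *\<^sub>R x - (g * (q * (1 + r))) *\<^sub>R x" using Aa by (simp add: algebra_simps)
    finally show ?thesis using q1 by simp
  qed
  have iDx: "matrix_inv D *v x = q *\<^sub>R a" by (rule minv_eq[OF iD Dx])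
  have iDAw: "matrix_inv D *v (A *v w) = w - (q * g) *\<^sub>R a" by (rule minv_eq[OF iD DAw])
  have yhat: "x \<bullet> (matrix_inv D *v (A *v w)) = q * g"
  proof -
    have "x \<bullet> (matrix_inv D *v (A *v w)) = g - q * g * r" unfolding iDAw by (simp add: g_def ra inner_diff_right)
    also have "\<dots> = q * g" using q1 by (simp add: algebra_simps) (metis mult.assoc mult.commute mult.left_commute q1 distrib_left mult_1_right)
    finally show ?thesis .
  qed
  define \<beta> where "\<beta> = q * (y - g)"
  have w': "matrix_inv D *v (A *v w + y *\<^sub>R x) = w + \<beta> *\<^sub>R a"
    by (simp add: matrix_vector_right_distrib matrix_vector_mult_scaleR iDAw iDx \<beta>_def algebra_simps)
  define h where "h = v - w"
  define s where "s = x \<bullet> h"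
  have vw: "v - (w + \<beta> *\<^sub>R a) = h - \<beta> *\<^sub>R a" by (simp add: h_def)
  have Dh: "D *v (h - \<beta> *\<^sub>R a) = A *v h + (s - \<beta> * (1 + r)) *\<^sub>R x"
    by (simp add: D_def matrix_vector_mult_add_rdistrib outer_mult matrix_vector_mult_scaleR matrix_vector_mult_diff_distrib
        Aa inner_diff_right s_def ra algebra_simps)
  have aAh: "a \<bullet> (A *v h) = s" using symm_app[OF sA, of a h] Aa by (simp add: s_def)
  have F1: "(h - \<beta> *\<^sub>R a) \<bullet> (D *v (h - \<beta> *\<^sub>R a)) = h \<bullet> (A *v h) + s^2 - 2 * (y - g) * s + q * (y - g)^2 * r"
  proof -
    have ax: "a \<bullet> x = r" using ra by (simp add: inner_commute)
    have hx: "h \<bullet> x = s" by (simp add: s_def inner_commute)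
    have eq1: "(h - \<beta> *\<^sub>R a) \<bullet> (D *v (h - \<beta> *\<^sub>R a)) = h \<bullet> (A *v h) + (s - \<beta> * (1 + r)) * s - \<beta> * s - \<beta> * (s - \<beta> * (1 + r)) * r"
      unfolding Dh by (simp add: inner_add_right inner_diff_left aAh ax hx algebra_simps)
    have b1: "\<beta> * (1 + r) = y - g" using q1 by (simp add: \<beta>_def)
    have "(s - \<beta> * (1 + r)) * s - \<beta> * s - \<beta> * (s - \<beta> * (1 + r)) * r
       = s^2 - 2 * (y - g) * s + \<beta> * (y - g) * r"
    proof -
      have "(\<beta> * (1 + r)) * s = (y - g) * s" using b1 by simp
      then have b2: "\<beta> * s + \<beta> * (r * s) = (y - g) * s" by (simp add: algebra_simps)
      show ?thesis unfolding b1 using b2 by (simp add: power2_eq_square algebra_simps)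
    qed
    also have "\<dots> = s^2 - 2 * (y - g) * s + q * (y - g)^2 * r" by (simp add: \<beta>_def power2_eq_square algebra_simps)
    finally show ?thesis using eq1 by linarith
  qed
  have xv: "x \<bullet> v = s + g" by (simp add: s_def h_def g_def inner_diff_right)
  have rr: "r / (1 + r) = 1 - q" using r0 by (simp add: q_def field_simps)
  have "(y - q * g)^2 - y^2 * (1 - q) + (h \<bullet> (A *v h) + s^2 - 2 * (y - g) * s + q * (y - g)^2 * r)
        \<le> h \<bullet> (A *v h) + (s + g - y)^2"
  proof -
    have qq: "q * r = 1 - q" using q1 by (simp add: algebra_simps)
    have q0: "0 \<le> q" "q \<le> 1" using r0 by (auto simp: q_def field_simps)
    have e1: "q * (y - g)^2 * r = (1 - q) * (y - g)^2"
      using qq by (metis mult.commute mult.left_commute)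
    have e2: "(y - q * g)^2 - y^2 * (1 - q) - q * (y - g)^2 = - q * (1 - q) * g^2"
      by (simp add: power2_eq_square algebra_simps)
    have "- q * (1 - q) * g^2 \<le> 0" using q0 by (simp add: mult_nonneg_nonneg)
    then have "(y - q * g)^2 - y^2 * (1 - q) + q * (y - g)^2 * r - (y - g)^2 \<le> 0"
      using e1 e2 by (simp add: algebra_simps)
    then show ?thesis by (simp add: power2_eq_square algebra_simps)
  qed
  then show ?thesis unfolding yhat w' vw F1 rr xv h_def[symmetric] by simp
qed



definition outer2 :: "real^'n \<Rightarrow> real^'n \<Rightarrow> real^'n^'n" where
  "outer2 u v = (\<chi> i j. u$i * v$j)"

lemma mm_outer2_left: "(B::real^'n^'n) ** outer2 u v = outer2 (B *v u) v"
  by (simp add: outer2_def matrix_matrix_mult_def matrix_vector_mult_def vec_eq_iff sum_distrib_right mult.assoc)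

lemma mm_outer2_right: "outer2 u v ** (B::real^'n^'n) = outer2 u (transpose B *v v)"
  by (simp add: outer2_def matrix_matrix_mult_def matrix_vector_mult_def transpose_def vec_eq_iff sum_distrib_left mult.assoc mult.commute mult.left_commute)

lemma matrix_add_rdistrib: "((B::real^'n^'n) + C) ** A = B ** A + C ** A"
  by (simp add: matrix_matrix_mult_def vec_eq_iff sum.distrib algebra_simps)

lemma outer2_zero: "outer2 0 v = 0"
  by (simp add: outer2_def vec_eq_iff)

lemma det2: "det (mat 1 + outer2 u v) = 1 + u \<bullet> (v::real^'n)"
proof (cases "u = 0")
  case True then show ?thesis by (simp add: outer2_zero)
next
  case False
  then obtain k where uk: "u$k \<noteq> 0" by (auto simp: vec_eq_iff)
  define E :: "real^'n^'n" where "E = (\<chi> i j. if j = k then u$i else (mat 1::real^'n^'n)$i$j)"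
  have dE: "det E = u$k"
    using cramer_lemma[of k "mat 1 :: real^'n^'n" u, unfolded matrix_vector_mul_lid det_I] by (simp add: E_def)
  define z where "z = transpose E *v v"
  have zk: "z$k = u \<bullet> v"
    by (simp add: z_def E_def matrix_vector_mult_def transpose_def inner_vec_def mult.commute)
  have Ek: "E *v axis k 1 = u"
    by (simp add: matrix_vector_mult_basis column_def E_def vec_eq_iff)
  define N where "N = mat 1 + outer2 (axis k 1) z"
  have "(mat 1 + outer2 u v) ** E = E ** N"
    by (simp add: N_def matrix_add_ldistrib matrix_add_rdistrib mm_outer2_left mm_outer2_right Ek z_def)
  then have "det (mat 1 + outer2 u v) * det E = det E * det N" by (metis det_mul)
  then have dM: "det (mat 1 + outer2 u v) = det N" using uk dE by simp
  have tN: "transpose N = (\<chi> i j. if j = k then (axis k 1 + z)$i else (mat 1::real^'n^'n)$i$j)"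
    unfolding vec_eq_iff
  proof (intro allI)
    fix i j
    have ax: "\<And>i. axis k (1::real) $ i = (if i = k then 1 else 0)" by (simp add: axis_def)
    have m1: "\<And>i j. (mat 1::real^'n^'n) $ i $ j = (if i = j then 1 else 0)" by (simp add: mat_def)
    show "transpose N $ i $ j = (\<chi> i j. if j = k then (axis k 1 + z)$i else (mat 1::real^'n^'n)$i$j) $ i $ j"
      by (simp add: N_def transpose_def outer2_def ax m1)
  qed
  have c: "det (\<chi> i j. if j = k then (axis k 1 + z)$i else (mat 1::real^'n^'n)$i$j) = (axis k 1 + z)$k"
    using cramer_lemma[of k "mat 1 :: real^'n^'n" "axis k 1 + z", unfolded matrix_vector_mul_lid det_I] by simp
  have "det N = (axis k 1 + z)$k"
    using c det_transpose[of N] unfolding tN by simp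
  then show ?thesis using dM zk by (simp add: axis_def)
qed

lemma det1:
  fixes A :: "real^'n^'n"
  assumes "invertible A"
  shows "det (A + s *\<^sub>R outer x) = det A * (1 + s * (x \<bullet> (matrix_inv A *v x)))"
proof -
  have "A + s *\<^sub>R outer x = A ** (mat 1 + outer2 (s *\<^sub>R (matrix_inv A *v x)) x)"
  proof -
    have "A ** (mat 1 + outer2 (s *\<^sub>R (matrix_inv A *v x)) x) = A + outer2 (s *\<^sub>R x) x"
      by (simp add: matrix_add_ldistrib mm_outer2_left matrix_vector_mult_scaleR minv_vec[OF assms])
    also have "outer2 (s *\<^sub>R x) x = s *\<^sub>R outer x"
      by (simp add: outer2_def outer_def vec_eq_iff mult.assoc)
    finally show ?thesis by simp
  qed
  then show ?thesis by (simp add: det_mul det2 inner_commute)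
qed



lemma det_inv: "invertible (M::real^'n^'n) \<Longrightarrow> det (matrix_inv M) = 1 / det M"
  using minv(1)[of M] det_mul[of M "matrix_inv M"]
  by (metis det_I invertible_det_nz nonzero_eq_divide_eq mult.commute)

lemma sum_outer_axis: "(\<Sum>i\<in>UNIV. outer (axis i (1::real))) = (mat 1 :: real^'n^'n)"
proof -
  have "(\<Sum>i\<in>UNIV. outer (axis i (1::real))) $ a $ b = (mat 1 :: real^'n^'n) $ a $ b" for a b
  proof -
    have e: "outer (axis i (1::real)) $ a $ b = (if i = a then (if a = b then 1 else 0) else 0)" for i
      by (auto simp add: outer_def axis_def)
    have "(\<Sum>i\<in>UNIV. outer (axis i (1::real))) $ a $ b = (\<Sum>i\<in>UNIV. outer (axis i (1::real)) $ a $ b)"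
      by (simp add: sum_component)
    also have "\<dots> = (if a = b then 1 else 0)" unfolding e by (simp add: sum.delta)
    finally show ?thesis by (simp add: mat_def)
  qed
  then show ?thesis by (simp add: vec_eq_iff)
qed

lemma pd_scaled_id: "k > 0 \<Longrightarrow> pd (k *\<^sub>R (mat 1 :: real^'n^'n))"
  by (simp add: pd_def quad_scaled_id)

lemma Astep:
  fixes D :: "real^'n^'n"
  assumes sD: "symm D" and pD: "pd D" and dD: "det D > 0" and K: "K > 0" and c: "c > 0"
    and bD: "\<And>v. v \<bullet> (D *v v) \<le> K * (norm v)^2"
  defines "P \<equiv> matrix_inv D + (1/c) *\<^sub>R mat 1"
  defines "A \<equiv> matrix_inv P"
  shows "symm A" "pd A" "invertible P" "det A > 0"
    "det D / (1 + K/c)^CARD('n) \<le> det A"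
    "\<And>v. v \<bullet> (A *v v) \<le> (K * c / (K + c)) * (norm v)^2"
proof -
  have iD: "invertible D" using pd_invertible pD by blast
  have sDi: "symm (matrix_inv D)" by (rule symm_inv[OF sD iD])
  have pDi: "pd (matrix_inv D)" by (rule pd_inv[OF pD])
  have lDi: "\<And>v. (norm v)^2 / K \<le> v \<bullet> (matrix_inv D *v v)" by (rule inv_lower[OF sD pD K bD])
  have sP: "symm P" unfolding P_def by (rule symm_add[OF sDi symm_scaled_id])
  have pP: "pd P" unfolding P_def
    by (rule pd_add_psd[OF pDi]) (simp add: quad_scaled_id c less_imp_le)
  show iP: "invertible P" using pd_invertible pP by blast
  show "symm A" unfolding A_def by (rule symm_inv[OF sP iP])
  show "pd A" unfolding A_def by (rule pd_inv[OF pP])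
  have lP: "(1/K + 1/c) * (norm v)^2 \<le> v \<bullet> (P *v v)" for v
    using lDi[of v] unfolding P_def by (simp add: matrix_vector_mult_add_rdistrib inner_add_right quad_scaled_id algebra_simps)
  show "\<And>v. v \<bullet> (A *v v) \<le> (K * c / (K + c)) * (norm v)^2"
  proof -
    fix v :: "real^'n"
    have "v \<bullet> (A *v v) \<le> (norm v)^2 / (1/K + 1/c)"
      unfolding A_def by (rule inv_upper[OF pP _ lP]) (use K c in \<open>simp add: add_pos_pos\<close>)
    moreover have "(norm v)^2 / (1/K + 1/c) = (K * c / (K + c)) * (norm v)^2"
      using K c by (simp add: field_simps)
    ultimately show "v \<bullet> (A *v v) \<le> (K * c / (K + c)) * (norm v)^2" by simp
  qed
  define PS where "PS = (\<lambda>S. matrix_inv D + (1/c) *\<^sub>R (\<Sum>i\<in>S. outer (axis i (1::real))))"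
  have ind: "finite S \<Longrightarrow> symm (PS S) \<and> pd (PS S) \<and> (\<forall>v. (norm v)^2 / K \<le> v \<bullet> (PS S *v v))
      \<and> 0 < det (PS S) \<and> det (PS S) \<le> det (matrix_inv D) * (1 + K/c)^card S" for S
  proof (induction S rule: finite_induct)
    case empty
    have "det (matrix_inv D) > 0" using det_inv[OF iD] dD by simp
    then show ?case using sDi pDi lDi by (simp add: PS_def)
  next
    case (insert k S)
    have PSi: "PS (insert k S) = PS S + (1/c) *\<^sub>R outer (axis k 1)"
      using insert(1,2) by (simp add: PS_def scaleR_add_right)
    have sS: "symm (PS S)" and pS: "pd (PS S)" and lS: "\<And>v. (norm v)^2 / K \<le> v \<bullet> (PS S *v v)"
      and dS: "0 < det (PS S)" and uS: "det (PS S) \<le> det (matrix_inv D) * (1 + K/c)^card S"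
      using insert(3) by auto
    have symo: "symm ((1/c) *\<^sub>R outer (axis k (1::real)))"
      by (simp add: symm_def scaleR_matrix_vector_assoc[symmetric] outer_mult inner_commute)
    have psdo: "0 \<le> v \<bullet> (((1/c) *\<^sub>R outer (axis k (1::real))) *v v)" for v
      by (simp add: scaleR_matrix_vector_assoc[symmetric] quad_outer c less_imp_le)
    have iS: "invertible (PS S)" using pd_invertible pS by blast
    define \<rho> where "\<rho> = axis k (1::real) \<bullet> (matrix_inv (PS S) *v axis k 1)"
    have lS': "(1/K) * (norm v)^2 \<le> v \<bullet> (PS S *v v)" for v using lS[of v] by simp
    have r1: "\<rho> \<le> (norm (axis k (1::real)))^2 / (1/K)"
      unfolding \<rho>_def by (rule inv_upper[OF pS _ lS']) (simp add: K)
    then have r1': "\<rho> \<le> K" by (simp add: norm_axis_1)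
    have r0: "0 \<le> \<rho>" unfolding \<rho>_def by (rule pd_nonneg[OF pd_inv[OF pS]])
    have dI: "det (PS (insert k S)) = det (PS S) * (1 + (1/c) * \<rho>)"
      unfolding PSi \<rho>_def by (rule det1[OF iS])
    have f1: "1 \<le> 1 + (1/c) * \<rho>" using r0 c by simp
    have f2: "1 + (1/c) * \<rho> \<le> 1 + K/c" using r1' c by (simp add: divide_right_mono)
    have "det (PS (insert k S)) \<le> det (matrix_inv D) * (1 + K/c)^card S * (1 + K/c)"
      unfolding dI by (rule mult_mono[OF uS f2]) (use dS uS f1 in linarith)+
    then have u': "det (PS (insert k S)) \<le> det (matrix_inv D) * (1 + K/c)^card (insert k S)"
      using insert(1,2) by (simp add: algebra_simps)
    have "0 < det (PS (insert k S))" unfolding dI using dS f1 by simp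
    moreover have "symm (PS (insert k S))" unfolding PSi by (rule symm_add[OF sS symo])
    moreover have "pd (PS (insert k S))" unfolding PSi by (rule pd_add_psd[OF pS psdo])
    moreover have "(norm v)^2 / K \<le> v \<bullet> (PS (insert k S) *v v)" for v
      using lS[of v] psdo[of v] unfolding PSi by (simp add: matrix_vector_mult_add_rdistrib inner_add_right)
    ultimately show ?case using u' by blast
  qed
  have PU: "PS UNIV = P" by (simp add: PS_def P_def sum_outer_axis)
  have dP: "0 < det P" "det P \<le> det (matrix_inv D) * (1 + K/c)^CARD('n)"
    using ind[of UNIV] unfolding PU by auto
  have dA: "det A = 1 / det P" unfolding A_def by (rule det_inv[OF iP])
  show "det A > 0" using dA dP by simp
  have dDi: "det (matrix_inv D) = 1 / det D" by (rule det_inv[OF iD])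
  have pos: "0 < (1 + K/c)^CARD('n)" using K c by (simp add: add_pos_pos)
  have "1 / (det (matrix_inv D) * (1 + K/c)^CARD('n)) \<le> 1 / det P"
    by (rule divide_left_mono[OF dP(2)]) (use dP pos in auto)
  then show "det D / (1 + K/c)^CARD('n) \<le> det A" unfolding dA dDi by (simp add: field_simps)
qed



lemma scaled_mat_mult: "(k *\<^sub>R mat 1) ** (A::real^'n^'n) = k *\<^sub>R A"
  by (metis matrix_mul_lid matrix_scalar_ac scalar_matrix_assoc)

lemma det_scaled_id: "det (k *\<^sub>R (mat 1::real^'n^'n)) = k ^ CARD('n)"
proof -
  have "det (k *\<^sub>R (mat 1::real^'n^'n)) = prod (\<lambda>i. (k *\<^sub>R (mat 1::real^'n^'n))$i$i) UNIV"
    by (rule det_diagonal) (simp add: mat_def)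
  then show ?thesis by (simp add: mat_def)
qed

lemma det_scaled: "det (k *\<^sub>R (A::real^'n^'n)) = k ^ CARD('n) * det A"
  by (metis scaled_mat_mult det_mul det_scaled_id)

lemma trace_scaled_id: "trace (k *\<^sub>R (mat 1::real^'n^'n)) = k * real CARD('n)"
  by (simp add: trace_def mat_def)

lemma Nid:
  fixes D :: "real^'n^'n"
  assumes pD: "pd D" and c: "c > 0"
  shows "matrix_inv (mat 1 + (1/c) *\<^sub>R D) *v e = matrix_inv (matrix_inv D + (1/c) *\<^sub>R mat 1) *v (matrix_inv D *v e)"
proof -
  define m where "m = mat 1 + (1/c) *\<^sub>R D"
  have iD: "invertible D" using pd_invertible pD by blast
  have im: "invertible m"
  proof (rule inj_invertible)
    fix z assume "m *v z = 0"
    then have "z + (1/c) *\<^sub>R (D *v z) = 0" by (simp add: m_def matrix_vector_mult_add_rdistrib scaleR_matrix_vector_assoc)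
    then have "z \<bullet> (z + (1/c) *\<^sub>R (D *v z)) = 0" by simp
    then have "z \<bullet> z + (1/c) * (z \<bullet> (D *v z)) = 0" by (simp add: inner_add_right)
    moreover have "0 \<le> z \<bullet> (D *v z)" by (rule pd_nonneg[OF pD])
    ultimately have "z \<bullet> z \<le> 0" using c by (smt (verit) divide_nonneg_nonneg mult_nonneg_nonneg)
    then show "z = 0" by (metis inner_eq_zero_iff order_antisym inner_ge_zero)
  qed
  define P where "P = matrix_inv D + (1/c) *\<^sub>R mat 1"
  have pP: "pd P" unfolding P_def
    by (rule pd_add_psd[OF pd_inv[OF pD]]) (simp add: quad_scaled_id c less_imp_le)
  have iP: "invertible P" using pd_invertible pP by blast
  define w where "w = matrix_inv D *v e"
  define z where "z = matrix_inv P *v w"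
  have "P *v z = w" using minv_vec(1)[OF iP, of w] z_def by simp
  then have Pz: "matrix_inv D *v z + (1/c) *\<^sub>R z = w"
    unfolding P_def by (simp add: matrix_vector_mult_add_rdistrib scaled_id_mult)
  have "D *v (matrix_inv D *v z + (1/c) *\<^sub>R z) = D *v w" using Pz by simp
  then have "z + (1/c) *\<^sub>R (D *v z) = e"
    by (simp add: matrix_vector_right_distrib matrix_vector_mult_scaleR minv_vec(1)[OF iD] w_def)
  then have "m *v z = e" by (simp add: m_def matrix_vector_mult_add_rdistrib scaleR_matrix_vector_assoc)
  then show ?thesis using minv_eq[OF im] unfolding m_def[symmetric] P_def[symmetric] w_def[symmetric] z_def[symmetric] by blast
qed

lemma Mfix:
  fixes X c M :: real
  assumes "X > 0" "c > 0" "M \<ge> (3 * X^2 + sqrt (X^4 + 4 * X^2 * c)) / 2"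
  shows "M * c / (M + c) + X^2 \<le> M"
proof -
  define s where "s = sqrt (X^4 + 4 * X^2 * c)"
  have pp: "0 \<le> X^4 + 4 * X^2 * c" by (intro add_nonneg_nonneg) (use assms in auto)
  have s0: "0 \<le> s" using pp by (simp add: s_def)
  have s2: "s^2 = X^4 + 4 * X^2 * c" unfolding s_def using pp by (rule real_sqrt_pow2)
  define m where "m = M - X^2/2"
  have x2: "0 \<le> X^2" by simp
  have m0: "3 * X^2 + s \<le> 2 * M" using assms(3) unfolding s_def[symmetric] by simp
  have m: "s/2 \<le> m" unfolding m_def using m0 zero_le_power2[of X] by linarith
  have "(s/2)^2 \<le> m^2" by (rule power_mono[OF m]) (simp add: s0)
  then have "X^2 * c \<le> M^2 - X^2 * M" unfolding m_def using s2 by (simp add: power2_eq_square power4_eq_xxxx field_simps)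
  moreover have M0: "M > 0" using m0 s0 zero_less_power[OF assms(1), of 2] by linarith
  ultimately show ?thesis using assms(2) by (simp add: field_simps power2_eq_square)
qed

lemma ln_lower: "0 \<le> r \<Longrightarrow> r / (1 + r) \<le> ln (1 + (r::real))"
proof -
  assume r: "0 \<le> r"
  have "ln (1 / (1 + r)) \<le> 1 / (1 + r) - 1" by (rule ln_le_minus_one) (use r in simp)
  moreover have "ln (1 / (1 + r)) = - ln (1 + r)" using r by (simp add: ln_div)
  moreover have "1 / (1 + r) - 1 = - (r / (1 + r))" using r by (simp add: field_simps)
  ultimately show ?thesis by simp
qed



lemma part1:
  fixes x u :: "nat \<Rightarrow> real^'n" and y :: "nat \<Rightarrow> real"
    and b c X Y :: real and T :: nat
  assumes T: "T \<ge> 1" and b: "0 < b" and bc: "b < c" and X: "X > 0" and Y: "Y \<ge> 0"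
    and xb: "\<And>t. 1 \<le> t \<Longrightarrow> t \<le> T \<Longrightarrow> (norm (x t))^2 \<le> X^2"
    and yb: "\<And>t. 1 \<le> t \<Longrightarrow> t \<le> T \<Longrightarrow> \<bar>y t\<bar> \<le> Y"
  shows "laser_loss b c x y T \<le>
           b * (norm (u 1))^2 + comp_loss u x y T
           + Y^2 * ln (det ((1 / b) *\<^sub>R laser_D b c x T))
           + (1 / c) * Y^2 * trace (laser_D b c x 0)
           + c * variation u T
           + (1 / c) * Y^2 * real T * real CARD('n)
               * max ((3 * X^2 + sqrt (X^4 + 4 * X^2 * c)) / 2) (b + X^2)"
proof -
  define D where "D = laser_D b c x"
  define P where "P = (\<lambda>t. matrix_inv (D t) + (1/c) *\<^sub>R mat 1)"
  define A where "A = (\<lambda>t. matrix_inv (P t))"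
  define \<beta> where "\<beta> = b * c / (c - b)"
  define M where "M = max ((3 * X^2 + sqrt (X^4 + 4 * X^2 * c)) / 2) (b + X^2)"
  define K where "K = (\<lambda>t::nat. if t = 0 then \<beta> else M)"
  have c0: "c > 0" using b bc by simp
  have \<beta>0: "\<beta> > 0" using b bc by (simp add: \<beta>_def)
  have M0: "M > 0" unfolding M_def using b X by (smt (verit) max.cobounded2 zero_le_power2)
  have K0: "K t > 0" for t using \<beta>0 M0 by (simp add: K_def)
  have bK: "\<beta> * c / (\<beta> + c) = b" using b bc unfolding \<beta>_def by (simp add: field_simps)
  have Dsuc: "D (Suc t) = A t + outer (x (Suc t))" for t by (simp add: D_def A_def P_def)
  have D0: "D 0 = \<beta> *\<^sub>R mat 1" by (simp add: D_def \<beta>_def)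
  have Inv: "t \<le> T \<Longrightarrow> symm (D t) \<and> pd (D t) \<and> 0 < det (D t) \<and> (\<forall>v. v \<bullet> (D t *v v) \<le> K t * (norm v)^2)" for t
  proof (induction t)
    case 0
    show ?case unfolding D0 using \<beta>0
      by (simp add: symm_scaled_id pd_scaled_id det_scaled_id quad_scaled_id K_def)
  next
    case (Suc t)
    then have I: "symm (D t)" "pd (D t)" "0 < det (D t)" "\<And>v. v \<bullet> (D t *v v) \<le> K t * (norm v)^2" by auto
    note As = Astep[OF I(1,2,3) K0[of t] c0 I(4), folded P_def A_def]
    have AsA: "symm (A t)" "pd (A t)" "det (A t) > 0" "\<And>v. v \<bullet> (A t *v v) \<le> (K t * c / (K t + c)) * (norm v)^2"
      using As unfolding P_def A_def by auto
    have LM: "K t * c / (K t + c) + X^2 \<le> M"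
    proof (cases "t = 0")
      case True then show ?thesis using bK by (simp add: K_def M_def)
    next
      case False then show ?thesis unfolding K_def using Mfix[OF X c0, of M] by (simp add: M_def)
    qed
    have xs: "(norm (x (Suc t)))^2 \<le> X^2" using xb Suc.prems by simp
    have sD: "symm (D (Suc t))" unfolding Dsuc by (rule symm_add[OF AsA(1) symm_outer])
    have pD: "pd (D (Suc t))" unfolding Dsuc by (rule pd_add_psd[OF AsA(2)]) (simp add: quad_outer)
    have "det (D (Suc t)) = det (A t) * (1 + 1 * (x (Suc t) \<bullet> (matrix_inv (A t) *v x (Suc t))))"
      unfolding Dsuc using det1[OF pd_invertible[OF AsA(2)], of 1 "x (Suc t)"] by simp
    moreover have "0 \<le> x (Suc t) \<bullet> (matrix_inv (A t) *v x (Suc t))" by (rule pd_nonneg[OF pd_inv[OF AsA(2)]])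
    ultimately have dD: "0 < det (D (Suc t))" using AsA(3) by simp
    have bD: "v \<bullet> (D (Suc t) *v v) \<le> K (Suc t) * (norm v)^2" for v
    proof -
      have cs: "(x (Suc t) \<bullet> v)^2 \<le> (norm (x (Suc t)))^2 * (norm v)^2"
      proof -
        have "\<bar>x (Suc t) \<bullet> v\<bar> \<le> norm (x (Suc t)) * norm v" by (rule Cauchy_Schwarz_ineq2)
        then have "\<bar>x (Suc t) \<bullet> v\<bar>^2 \<le> (norm (x (Suc t)) * norm v)^2" by (rule power_mono) simp
        then show ?thesis by (simp add: power_mult_distrib)
      qed
      have "v \<bullet> (D (Suc t) *v v) = v \<bullet> (A t *v v) + (x (Suc t) \<bullet> v)^2"
        unfolding Dsuc by (simp add: matrix_vector_mult_add_rdistrib inner_add_right quad_outer)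
      also have "\<dots> \<le> (K t * c / (K t + c)) * (norm v)^2 + X^2 * (norm v)^2"
        using AsA(4)[of v] cs xs by (smt (verit) mult_right_mono zero_le_power2)
      also have "\<dots> \<le> M * (norm v)^2"
      proof -
        have "(K t * c / (K t + c) + X^2) * (norm v)^2 \<le> M * (norm v)^2" by (rule mult_right_mono[OF LM]) simp
        then show ?thesis by (simp add: distrib_right)
      qed
      finally show ?thesis by (simp add: K_def)
    qed
    show ?case using sD pD dD bD by blast
  qed
  define W where "W = (\<lambda>t. matrix_inv (D t) *v laser_e b c x y t)"
  define r where "r = (\<lambda>t. x (Suc t) \<bullet> (matrix_inv (A t) *v x (Suc t)))"
  define \<rho> where "\<rho> = (\<lambda>s::nat. r (s - 1) / (1 + r (s - 1)))"
  define pr where "pr = laser_pred b c x y"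
  define d where "d = CARD('n)"
  have AsT: "symm (A t) \<and> pd (A t) \<and> det (D t) / (1 + K t/c)^CARD('n) \<le> det (A t) \<and> det (A t) > 0
      \<and> (\<forall>v. v \<bullet> (A t *v v) \<le> (K t * c / (K t + c)) * (norm v)^2)" if tT: "t < T" for t
  proof -
    have I: "symm (D t)" "pd (D t)" "0 < det (D t)" "\<And>v. v \<bullet> (D t *v v) \<le> K t * (norm v)^2"
      using Inv[of t] tT by auto
    note As = Astep[OF I(1,2,3) K0[of t] c0 I(4)]
    show ?thesis using As unfolding P_def A_def by auto
  qed
  have pDt: "pd (D t)" if "t \<le> T" for t using Inv that by blast
  have predE: "pr (Suc t) = x (Suc t) \<bullet> (matrix_inv (D (Suc t)) *v (A t *v W t))" if tT: "t < T" for t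
    using Nid[OF pDt[of t] c0, of "laser_e b c x y t"] tT
    by (simp add: pr_def laser_pred_def D_def[symmetric] A_def P_def W_def)
  have eE: "laser_e b c x y (Suc t) = A t *v W t + y (Suc t) *\<^sub>R x (Suc t)" if tT: "t < T" for t
    using Nid[OF pDt[of t] c0, of "laser_e b c x y t"] tT
    by (simp add: D_def[symmetric] A_def P_def W_def)
  have r0: "0 \<le> r t" if "t < T" for t
    unfolding r_def by (rule pd_nonneg[OF pd_inv]) (use AsT[OF that] in blast)
  have stepF: "(y (Suc t) - pr (Suc t))^2 - (y (Suc t))^2 * (r t / (1 + r t))
      + (v - W (Suc t)) \<bullet> (D (Suc t) *v (v - W (Suc t)))
      \<le> (v - W t) \<bullet> (A t *v (v - W t)) + (x (Suc t) \<bullet> v - y (Suc t))^2" if tT: "t < T" for t v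
  proof -
    have sA: "symm (A t)" and pA: "pd (A t)" using AsT[OF tT] by auto
    have Wsuc: "matrix_inv (D (Suc t)) *v (A t *v W t + y (Suc t) *\<^sub>R x (Suc t)) = W (Suc t)"
      unfolding W_def eE[OF tT] by (simp only: W_def)
    note st = step[OF sA pA, where x="x (Suc t)" and w="W t" and y="y (Suc t)" and v=v]
    show ?thesis using st unfolding Dsuc[symmetric] Wsuc predE[OF tT, symmetric] by (simp add: r_def)
  qed
  have detF: "det (D (Suc t)) = det (A t) * (1 + r t)" if tT: "t < T" for t
  proof -
    have pA: "pd (A t)" using AsT[OF tT] by auto
    show ?thesis unfolding Dsuc r_def using det1[OF pd_invertible[OF pA], of 1 "x (Suc t)"] by simp
  qed
  have W0: "W 0 = 0" by (simp add: W_def)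
  have claim: "(\<Sum>s=1..Suc k. (y s - pr s)^2) + (u (Suc k) - W (Suc k)) \<bullet> (D (Suc k) *v (u (Suc k) - W (Suc k)))
      \<le> b * (norm (u 1))^2 + (\<Sum>s=1..Suc k. (x s \<bullet> u s - y s)^2) + c * (\<Sum>s=1..k. (norm (u s - u (Suc s)))^2)
        + (\<Sum>s=1..Suc k. (y s)^2 * \<rho> s)" if "Suc k \<le> T" for k
    using that
  proof (induction k)
    case 0
    have T0: "0 < T" using 0 by simp
    have "(u 1) \<bullet> (A 0 *v u 1) \<le> (K 0 * c / (K 0 + c)) * (norm (u 1))^2" using AsT[OF T0] by blast
    then have a0: "(u 1) \<bullet> (A 0 *v u 1) \<le> b * (norm (u 1))^2" using bK by (simp add: K_def)
    show ?case using stepF[OF T0, of "u 1"] a0 W0 by (simp add: \<rho>_def)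
  next
    case (Suc k)
    have kT: "Suc k < T" using Suc.prems by simp
    note IH = Suc.IH[OF less_imp_le[OF kT]]
    have Ak: "A (Suc k) = matrix_inv (matrix_inv (D (Suc k)) + (1/c) *\<^sub>R mat 1)" by (simp add: A_def P_def)
    have I: "symm (D (Suc k))" "pd (D (Suc k))" using Inv[of "Suc k"] kT by auto
    have cv: "(u (Suc (Suc k)) - W (Suc k)) \<bullet> (A (Suc k) *v (u (Suc (Suc k)) - W (Suc k)))
        \<le> (u (Suc k) - W (Suc k)) \<bullet> (D (Suc k) *v (u (Suc k) - W (Suc k))) + c * (norm (u (Suc k) - u (Suc (Suc k))))^2"
      using conv[OF I c0, of "u (Suc (Suc k)) - W (Suc k)" "u (Suc k) - W (Suc k)"] unfolding Ak[symmetric] by simp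
    note sf = stepF[OF kT, of "u (Suc (Suc k))"]
    show ?case using IH cv sf by (simp add: \<rho>_def algebra_simps)
  qed
  have rho_ln: "\<rho> (Suc t) \<le> ln (det (D (Suc t))) - ln (det (A t))" if tT: "t < T" for t
  proof -
    have dA: "det (A t) > 0" using AsT[OF tT] by blast
    have "ln (det (D (Suc t))) = ln (det (A t)) + ln (1 + r t)"
      unfolding detF[OF tT] using dA r0[OF tT] by (simp add: ln_mult)
    moreover have "r t / (1 + r t) \<le> ln (1 + r t)" by (rule ln_lower[OF r0[OF tT]])
    ultimately show ?thesis by (simp add: \<rho>_def)
  qed
  have lnM: "ln (1 + M / c) \<le> M / c" using ln_le_minus_one[of "1 + M/c"] M0 c0 by (simp add: add_pos_pos)
  have lclaim: "(\<Sum>s=1..Suc k. \<rho> s) \<le> ln (det (D (Suc k))) - real d * ln b + real k * (real d * M / c)"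
    if "Suc k \<le> T" for k
    using that
  proof (induction k)
    case 0
    have T0: "0 < T" using 0 by simp
    have "det (D 0) / (1 + K 0/c)^CARD('n) \<le> det (A 0)" using AsT[OF T0] by blast
    moreover have "det (D 0) / (1 + K 0/c)^CARD('n) = b ^ CARD('n)"
    proof -
      have "det (D 0) / (1 + K 0/c)^CARD('n) = (\<beta> / (1 + \<beta>/c))^CARD('n)"
        unfolding D0 det_scaled_id by (simp add: K_def power_divide)
      also have "\<beta> / (1 + \<beta>/c) = b" using bK c0 \<beta>0 by (simp add: field_simps)
      finally show ?thesis .
    qed
    ultimately have "b ^ CARD('n) \<le> det (A 0)" by simp
    moreover have bp: "0 < b ^ CARD('n)" using b by simp
    ultimately have "ln (b ^ CARD('n)) \<le> ln (det (A 0))" using ln_le_cancel_iff[OF bp, of "det (A 0)"] by simp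
    then have "real d * ln b \<le> ln (det (A 0))" by (simp add: ln_realpow d_def)
    then show ?case using rho_ln[OF T0] by simp
  next
    case (Suc k)
    have kT: "Suc k < T" using Suc.prems by simp
    note IH = Suc.IH[OF less_imp_le[OF kT]]
    have dD: "det (D (Suc k)) > 0" using Inv[of "Suc k"] kT by auto
    have pos: "0 < (1 + M/c)^CARD('n)" using M0 c0 by (simp add: add_pos_nonneg)
    have "det (D (Suc k)) / (1 + M/c)^CARD('n) \<le> det (A (Suc k))" using AsT[OF kT] by (simp add: K_def)
    moreover have qp: "0 < det (D (Suc k)) / (1 + M/c)^CARD('n)" using dD pos by simp
    ultimately have "ln (det (D (Suc k)) / (1 + M/c)^CARD('n)) \<le> ln (det (A (Suc k)))"
      using ln_le_cancel_iff[OF qp, of "det (A (Suc k))"] by simp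
    then have "ln (det (D (Suc k))) - real d * ln (1 + M/c) \<le> ln (det (A (Suc k)))"
      using dD pos by (simp add: ln_divide_pos ln_realpow d_def)
    moreover have "real d * ln (1 + M/c) \<le> real d * (M / c)" by (rule mult_left_mono[OF lnM]) simp
    moreover have S: "(\<Sum>s=1..Suc (Suc k). \<rho> s) = (\<Sum>s=1..Suc k. \<rho> s) + \<rho> (Suc (Suc k))" by simp
    moreover have E: "real (Suc k) * (real d * M / c) = real k * (real d * M / c) + real d * (M / c)"
      by (simp add: algebra_simps add_divide_distrib)
    ultimately show ?case using IH rho_ln[OF kT] by linarith
  qed
  obtain k0 where Tk: "T = Suc k0" using T by (cases T) auto
  have L: "laser_loss b c x y T = (\<Sum>s=1..Suc k0. (y s - pr s)^2)" by (simp add: laser_loss_def pr_def Tk)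
  have CL: "comp_loss u x y T = (\<Sum>s=1..Suc k0. (x s \<bullet> u s - y s)^2)" by (simp add: comp_loss_def Tk)
  have VV: "variation u T = (\<Sum>s=1..k0. (norm (u s - u (Suc s)))^2)" by (simp add: variation_def Tk)
  have Q: "0 \<le> (u (Suc k0) - W (Suc k0)) \<bullet> (D (Suc k0) *v (u (Suc k0) - W (Suc k0)))"
    by (rule pd_nonneg) (use Inv[of "Suc k0"] Tk in auto)
  have main1: "laser_loss b c x y T \<le> b * (norm (u 1))^2 + comp_loss u x y T + c * variation u T
      + (\<Sum>s=1..Suc k0. (y s)^2 * \<rho> s)"
    using claim[of k0] Q Tk unfolding L CL VV by simp
  have ysum: "(\<Sum>s=1..Suc k0. (y s)^2 * \<rho> s) \<le> Y^2 * (\<Sum>s=1..Suc k0. \<rho> s)"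
    unfolding sum_distrib_left
  proof (rule sum_mono)
    fix s assume s: "s \<in> {1..Suc k0}"
    have "s - 1 < T" using s Tk by auto
    then have "0 \<le> r (s - 1)" by (rule r0)
    then have rp: "0 \<le> \<rho> s" by (simp add: \<rho>_def)
    have "\<bar>y s\<bar> \<le> Y" using yb s Tk by auto
    then have "\<bar>y s\<bar>^2 \<le> Y^2" by (rule power_mono) simp
    then have "(y s)^2 \<le> Y^2" by simp
    then show "(y s)^2 * \<rho> s \<le> Y^2 * \<rho> s" by (rule mult_right_mono[OF _ rp])
  qed
  have lc: "(\<Sum>s=1..Suc k0. \<rho> s) \<le> ln (det (D T)) - real d * ln b + real k0 * (real d * M / c)"
    using lclaim[of k0] Tk by simp
  have dT: "det (D T) > 0" using Inv[of T] by auto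
  have lnb: "ln (det ((1 / b) *\<^sub>R laser_D b c x T)) = ln (det (D T)) - real d * ln b"
  proof -
    have "det ((1 / b) *\<^sub>R laser_D b c x T) = (1/b)^CARD('n) * det (D T)" by (simp add: det_scaled D_def)
    moreover have "ln ((1/b)^CARD('n) * det (D T)) = real d * ln (1/b) + ln (det (D T))"
      using b dT by (simp add: ln_mult ln_realpow d_def)
    moreover have "ln (1/b) = - ln b" using b by (simp add: ln_div)
    ultimately show ?thesis by simp
  qed
  have D0': "laser_D b c x 0 = \<beta> *\<^sub>R mat 1" using D0 by (simp only: D_def)
  have tr: "trace (laser_D b c x 0) = \<beta> * real d" unfolding D0' d_def by (rule trace_scaled_id)
  have Y2: "0 \<le> Y^2" by simp
  have e1: "Y^2 * (\<Sum>s=1..Suc k0. \<rho> s) \<le> Y^2 * (ln (det (D T)) - real d * ln b + real k0 * (real d * M / c))"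
    by (rule mult_left_mono[OF lc Y2])
  have e2: "Y^2 * (real k0 * (real d * M / c)) \<le> (1 / c) * Y^2 * real T * real d * M"
  proof -
    have "real k0 * (real d * M / c) \<le> real T * (real d * M / c)"
      by (rule mult_right_mono) (use Tk M0 c0 in auto)
    then have "Y^2 * (real k0 * (real d * M / c)) \<le> Y^2 * (real T * (real d * M / c))" by (rule mult_left_mono[OF _ Y2])
    then show ?thesis by (simp add: field_simps)
  qed
  have e3: "0 \<le> (1 / c) * Y^2 * trace (laser_D b c x 0)" unfolding tr using c0 \<beta>0 by simp
  show ?thesis using main1 ysum e1 e2 e3 unfolding lnb M_def[symmetric] d_def[symmetric]
    by (simp add: algebra_simps)
qed



lemma Mx_bound:
  fixes X c q t :: real
  assumes X: "X > 0" and q: "q = sqrt 2" and t: "t = sqrt c" and c: "c > 0"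
    and mu1: "9/8 * X^2 \<le> c" and mu2: "(b + X^2)^2 / (8 * X^2) \<le> c" and b: "b > 0"
  shows "max ((3 * X^2 + sqrt (X^4 + 4 * X^2 * c)) / 2) (b + X^2) \<le> 2 * q * X * t"
proof -
  have q2: "q^2 = 2" using q by simp
  have q0: "q > 0" using q by simp
  have t2: "t^2 = c" using t c by simp
  have t0: "t > 0" using t c by simp
  have A: "b + X^2 \<le> 2 * q * X * t"
  proof (rule power2_le_imp_le)
    have "(b + X^2)^2 \<le> c * (8 * X^2)" using mu2 X by (simp add: divide_le_eq)
    also have "c * (8 * X^2) = (2 * q * X * t)^2" using q2 t2 by (simp add: power_mult_distrib)
    finally show "(b + X^2)^2 \<le> (2 * q * X * t)^2" .
    show "0 \<le> 2 * q * X * t" using q0 X t0 by simp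
  qed
  have tl: "3 * q * X \<le> 4 * t"
  proof (rule power2_le_imp_le)
    have "(3 * q * X)^2 = 16 * (9/8 * X^2)" using q2 by (simp add: power_mult_distrib)
    also have "\<dots> \<le> 16 * c" using mu1 by simp
    also have "\<dots> = (4 * t)^2" using t2 by simp
    finally show "(3 * q * X)^2 \<le> (4 * t)^2" .
    show "0 \<le> 4 * t" using t0 by simp
  qed
  define s where "s = sqrt (X^4 + 4 * X^2 * c)"
  have pp: "0 \<le> X^4 + 4 * X^2 * c" using c by simp
  have s2: "s^2 = X^4 + 4 * X^2 * t^2" unfolding s_def using pp t2 by simp
  have s0: "0 \<le> s" unfolding s_def using pp by simp
  have id: "4 * ((4 * q * X * t - 3 * X^2)^2 - (X^4 + 4 * X^2 * t^2))
      = X^2 * (14 * X^2 + 18 * q * X * (4 * t - 3 * q * X) + 7 * (4 * t - 3 * q * X)^2)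
        + (q^2 - 2) * (64 * X^2 * t^2 - 9 * X^4)"
    by (simp add: power2_eq_square power4_eq_xxxx algebra_simps)
  have G: "0 \<le> X^2 * (14 * X^2 + 18 * q * X * (4 * t - 3 * q * X) + 7 * (4 * t - 3 * q * X)^2)"
    using tl q0 X by (intro mult_nonneg_nonneg add_nonneg_nonneg) auto
  have nn: "0 \<le> 4 * q * X * t - 3 * X^2"
  proof -
    have "3 * X^2 = X * (3 * q * X) * q / 2" using q2 by (simp add: power2_eq_square field_simps)
    also have "\<dots> \<le> X * (4 * t) * q / 2" by (intro divide_right_mono mult_right_mono mult_left_mono tl) (use X q0 in auto)
    finally have "3 * X^2 \<le> 2 * (q * X * t)" by (simp add: algebra_simps)
    moreover have "0 \<le> q * X * t" using q0 X t0 by simp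
    ultimately show ?thesis by linarith
  qed
  have B: "s \<le> 4 * q * X * t - 3 * X^2"
  proof (rule power2_le_imp_le[OF _ nn])
    show "s^2 \<le> (4 * q * X * t - 3 * X^2)^2" using id G q2 s2 by simp
  qed
  have "(3 * X^2 + s) / 2 \<le> 2 * q * X * t" using B by simp
  then show ?thesis using A unfolding s_def by simp
qed


lemma part2:
  fixes LL U CL LD tr V b c X Y \<epsilon> Tr dr :: real
  assumes b: "0 < b" and bc: "b < c" and X: "X > 0" and Y: "Y \<ge> 0" and Tr: "Tr \<ge> 0" and dr: "dr \<ge> 0"
    and tr: "tr = b * c / (c - b) * dr"
    and P1: "LL \<le> b * U + CL + Y^2 * LD + (1 / c) * Y^2 * tr + c * V
              + (1 / c) * Y^2 * Tr * dr * max ((3 * X^2 + sqrt (X^4 + 4 * X^2 * c)) / 2) (b + X^2)"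
    and e: "0 < \<epsilon>" "\<epsilon> < 1" "b = \<epsilon> * c"
    and V: "V > 0"
    and Vb: "V \<le> Tr * (sqrt 2 * Y^2 * dr * X) / (max (9 / 8 * X^2) ((b + X^2)^2 / (8 * X^2))) powr (3 / 2)"
    and cdef: "c = (sqrt 2 * Tr * Y^2 * dr * X / V) powr (2 / 3)"
  shows "LL \<le> b * U + 3 * (sqrt 2 * Y^2 * dr * X) powr (2 / 3) * Tr powr (2 / 3) * V powr (1 / 3)
             + \<epsilon> / (1 - \<epsilon>) * Y^2 * dr + CL + Y^2 * LD"
proof -
  define B where "B = sqrt 2 * Y^2 * dr * X"
  define \<mu> where "\<mu> = max (9 / 8 * X^2) ((b + X^2)^2 / (8 * X^2))"
  define Mx where "Mx = max ((3 * X^2 + sqrt (X^4 + 4 * X^2 * c)) / 2) (b + X^2)"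
  have c0: "c > 0" using b bc by simp
  have mu0: "\<mu> > 0" unfolding \<mu>_def using X by (simp add: max.strict_coboundedI1)
  have B0': "B \<ge> 0" unfolding B_def using Y dr X by simp
  have TB: "Tr * B > 0"
  proof (rule ccontr)
    assume "\<not> Tr * B > 0"
    then have "Tr * B = 0" using Tr B0' by (metis mult_pos_pos less_eq_real_def mult_eq_0_iff)
    then have Z0: "Tr * (sqrt 2 * Y^2 * dr * X) = 0" by (simp add: B_def)
    have "V \<le> 0" using Vb unfolding Z0 by simp
    then show False using V by simp
  qed
  then have T0: "Tr > 0" and B0: "B > 0" using Tr B0' by (auto simp: zero_less_mult_iff)
  define Z where "Z = Tr * B / V"
  have Z0: "Z > 0" unfolding Z_def using TB V by simp
  have cZ: "c = Z powr (2/3)" unfolding cdef Z_def B_def by (simp add: algebra_simps)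
  have ZV: "Tr * B = Z * V" unfolding Z_def using V by simp
  have muZ: "\<mu> powr (3/2) \<le> Z"
  proof -
    have "V \<le> Tr * B / \<mu> powr (3/2)" using Vb unfolding B_def \<mu>_def by simp
    then have "V * \<mu> powr (3/2) \<le> Tr * B" using mu0 by (simp add: le_divide_eq)
    then show ?thesis unfolding Z_def using V by (simp add: le_divide_eq mult.commute)
  qed
  have muc: "\<mu> \<le> c"
  proof -
    have "(\<mu> powr (3/2)) powr (2/3) \<le> Z powr (2/3)" by (rule powr_mono2) (use muZ mu0 in auto)
    then show ?thesis unfolding cZ using mu0 by (simp add: powr_powr)
  qed
  define t where "t = sqrt c"
  have t0: "t > 0" unfolding t_def using c0 by simp
  have t2: "t^2 = c" unfolding t_def using c0 by simp
  have tZ: "t = Z powr (1/3)" unfolding t_def cZ using Z0 by (simp add: powr_half_sqrt[symmetric] powr_powr)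
  have MxB: "Mx \<le> 2 * sqrt 2 * X * t" unfolding Mx_def
    by (rule Mx_bound[OF X refl t_def c0 _ _ b]) (use muc in \<open>simp_all add: \<mu>_def\<close>)
  have term1: "(1 / c) * Y^2 * Tr * dr * Mx \<le> 2 * Tr * B / t"
  proof -
    have "(1 / c) * Y^2 * Tr * dr * Mx \<le> (1 / c) * Y^2 * Tr * dr * (2 * sqrt 2 * X * t)"
      by (rule mult_left_mono[OF MxB]) (use c0 Y T0 dr in simp)
    also have "\<dots> = 2 * Tr * B * t / c" by (simp add: B_def algebra_simps)
    also have "\<dots> = 2 * Tr * B / t" using t0 unfolding t2[symmetric] by (simp add: power2_eq_square)
    finally show ?thesis .
  qed
  have trm: "(1 / c) * Y^2 * tr = \<epsilon> / (1 - \<epsilon>) * Y^2 * dr"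
    unfolding tr using e c0 by (simp add: field_simps)
  have Zsplit: "Z = Z powr (1/3) * Z powr (2/3)" using Z0 by (simp add: powr_add[symmetric])
  have tB: "2 * Tr * B / t = 2 * (Z powr (2/3) * V)"
  proof -
    have "2 * Tr * B / t = 2 * (Z * V) / Z powr (1/3)" unfolding tZ using ZV by simp
    also have "\<dots> = 2 * (Z powr (2/3) * V)"
    proof -
      have ee: "Z * V = Z powr (1/3) * (Z powr (2/3) * V)" using Zsplit by (metis mult.assoc)
      have p: "Z powr (1/3) > 0" using Z0 by simp
      show ?thesis unfolding ee using p by simp
    qed
    finally show ?thesis .
  qed
  have cV: "c * V = Z powr (2/3) * V" unfolding cZ ..
  have rhs: "3 * (sqrt 2 * Y^2 * dr * X) powr (2 / 3) * Tr powr (2 / 3) * V powr (1 / 3) = 3 * (Z powr (2/3) * V)"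
  proof -
    have "(sqrt 2 * Y^2 * dr * X) powr (2 / 3) * Tr powr (2 / 3) = (Tr * B) powr (2/3)"
      unfolding B_def using T0 B0' by (simp add: powr_mult B_def mult.commute)
    also have "\<dots> = Z powr (2/3) * V powr (2/3)" unfolding ZV using Z0 V by (simp add: powr_mult)
    finally have "(sqrt 2 * Y^2 * dr * X) powr (2 / 3) * Tr powr (2 / 3) * V powr (1/3) = Z powr (2/3) * (V powr (2/3) * V powr (1/3))"
      by simp
    also have "V powr (2/3) * V powr (1/3) = V" using V by (simp add: powr_add[symmetric])
    finally show ?thesis by simp
  qed
  show ?thesis using P1 term1 trm tB cV rhs unfolding Mx_def[symmetric] by linarith
qed


theorem corollary8:
  fixes x u :: "nat \<Rightarrow> real^'n" and y :: "nat \<Rightarrow> real"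
    and b c X Y :: real and T :: nat
  assumes "T \<ge> 1" and "0 < b" and "b < c" and "X > 0" and "Y \<ge> 0"
    and "\<And>t. 1 \<le> t \<Longrightarrow> t \<le> T \<Longrightarrow> (norm (x t))^2 \<le> X^2"
    and "\<And>t. 1 \<le> t \<Longrightarrow> t \<le> T \<Longrightarrow> \<bar>y t\<bar> \<le> Y"
  shows "laser_loss b c x y T \<le>
           b * (norm (u 1))^2 + comp_loss u x y T
           + Y^2 * ln (det ((1 / b) *\<^sub>R laser_D b c x T))
           + (1 / c) * Y^2 * trace (laser_D b c x 0)
           + c * variation u T
           + (1 / c) * Y^2 * real T * real CARD('n)
               * max ((3 * X^2 + sqrt (X^4 + 4 * X^2 * c)) / 2) (b + X^2)
    \<and> (\<forall>\<epsilon>. 0 < \<epsilon> \<and> \<epsilon> < 1 \<and> b = \<epsilon> * c \<and>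
           variation u T > 0 \<and>
           variation u T \<le> real T * (sqrt 2 * Y^2 * real CARD('n) * X)
               / (max (9 / 8 * X^2) ((b + X^2)^2 / (8 * X^2))) powr (3 / 2) \<and>
           c = (sqrt 2 * real T * Y^2 * real CARD('n) * X / variation u T) powr (2 / 3) \<longrightarrow>
           laser_loss b c x y T \<le>
             b * (norm (u 1))^2
             + 3 * (sqrt 2 * Y^2 * real CARD('n) * X) powr (2 / 3) * real T powr (2 / 3)
                 * variation u T powr (1 / 3)
             + \<epsilon> / (1 - \<epsilon>) * Y^2 * real CARD('n)
             + comp_loss u x y T
             + Y^2 * ln (det ((1 / b) *\<^sub>R laser_D b c x T)))"
proof -
  have p1: "laser_loss b c x y T \<le>
           b * (norm (u 1))^2 + comp_loss u x y T
           + Y^2 * ln (det ((1 / b) *\<^sub>R laser_D b c x T))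
           + (1 / c) * Y^2 * trace (laser_D b c x 0)
           + c * variation u T
           + (1 / c) * Y^2 * real T * real CARD('n)
               * max ((3 * X^2 + sqrt (X^4 + 4 * X^2 * c)) / 2) (b + X^2)"
    by (rule part1[OF assms])
  have tr: "trace (laser_D b c x 0) = b * c / (c - b) * real CARD('n)"
    by (simp add: trace_scaled_id)
  show ?thesis
  proof (intro conjI allI impI)
    show "laser_loss b c x y T \<le>
           b * (norm (u 1))^2 + comp_loss u x y T
           + Y^2 * ln (det ((1 / b) *\<^sub>R laser_D b c x T))
           + (1 / c) * Y^2 * trace (laser_D b c x 0)
           + c * variation u T
           + (1 / c) * Y^2 * real T * real CARD('n)
               * max ((3 * X^2 + sqrt (X^4 + 4 * X^2 * c)) / 2) (b + X^2)" by (rule p1)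
  next
    fix \<epsilon> :: real
    assume h: "0 < \<epsilon> \<and> \<epsilon> < 1 \<and> b = \<epsilon> * c \<and>
           variation u T > 0 \<and>
           variation u T \<le> real T * (sqrt 2 * Y^2 * real CARD('n) * X)
               / (max (9 / 8 * X^2) ((b + X^2)^2 / (8 * X^2))) powr (3 / 2) \<and>
           c = (sqrt 2 * real T * Y^2 * real CARD('n) * X / variation u T) powr (2 / 3)"
    show "laser_loss b c x y T \<le>
             b * (norm (u 1))^2
             + 3 * (sqrt 2 * Y^2 * real CARD('n) * X) powr (2 / 3) * real T powr (2 / 3)
                 * variation u T powr (1 / 3)
             + \<epsilon> / (1 - \<epsilon>) * Y^2 * real CARD('n)
             + comp_loss u x y T
             + Y^2 * ln (det ((1 / b) *\<^sub>R laser_D b c x T))"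
      by (rule part2[OF assms(2,3,4,5) _ _ tr p1]) (use h in auto)
  qed
qed

end
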